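(* For an $(\infty,\infty)$-category $\mathcal C$, the following are equivalent: (i) $\mathcal C$ is Noetherian; (ii) $\mathcal C$ is locally Noetherian, i.e. $\mathrm{Hom}_{\mathcal C}(x,y)$ is Noetherian for all objects $x,y$; (iii) $\mathcal C$ has small rank, i.e. $\operatorname{rank}\mathcal C<\theta$ for some ordinal $\theta$; (iv) $\mathcal C$ locally has small rank, i.e. $\mathrm{Hom}_{\mathcal C}(x,y)$ has small rank for all objects $x,y$.
   Context: A parallel morphism tower $(\vec\alpha,\vec\beta)$ in an $(\infty,\infty)$-category $\mathcal C$ is a countable sequence of pairs $(\alpha_0,\beta_0),(\alpha_1,\beta_1),\dots$ where $\alpha_0,\beta_0$ are objects of $\mathcal C$ and, for each $n\ge0$, $\alpha_{n+1},\beta_{n+1}$ are parallel $(n+1)$-morphisms $\alpha_n\to\beta_n$. $\mathcal C$ is Noetherian if for every parallel morphism tower there exists $N$ with $\mathrm{Hom}_{\mathcal C}(\alpha_N,\beta_N)\simeq *$. Rank is defined by transfinite induction: $\operatorname{rank}\mathcal C<0$ iff $\mathcal C\simeq *$; $\operatorname{rank}\mathcal C<\theta+1$ iff $\operatorname{rank}\mathrm{Hom}_{\mathcal C}(x,y)<\theta$ for all objects $x,y$; for a limit ordinal $\mu$, $\operatorname{rank}\mathcal C<\mu$ iff $\operatorname{rank}\mathcal C<\theta$ for some $\theta<\mu$. Ordinals here are small ordinals. *)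

theory Defs
  imports Main
begin

text \<open>Abstract (coinductive) presentation of an (infinity,infinity)-category:
  a set of objects, for each pair of objects a hom (infinity,infinity)-category,
  and the predicate "is equivalent to the terminal category *".\<close>

codatatype 'a icat = ICat (Obj: "'a set") (Hom: "'a \<Rightarrow> 'a \<Rightarrow> 'a icat") (Contr: bool)

coinductive valid_cat :: "'a icat \<Rightarrow> bool" where
  "\<lbrakk> Contr C \<longrightarrow> (\<forall>x\<in>Obj C. \<forall>y\<in>Obj C. Contr (Hom C x y));
     \<forall>x\<in>Obj C. \<forall>y\<in>Obj C. valid_cat (Hom C x y) \<rbrakk> \<Longrightarrow> valid_cat C"

primrec tower_cat :: "'a icat \<Rightarrow> (nat \<Rightarrow> 'a) \<Rightarrow> (nat \<Rightarrow> 'a) \<Rightarrow> nat \<Rightarrow> 'a icat" where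
  "tower_cat C a b 0 = C"
| "tower_cat C a b (Suc n) = Hom (tower_cat C a b n) (a n) (b n)"

definition is_tower :: "'a icat \<Rightarrow> (nat \<Rightarrow> 'a) \<Rightarrow> (nat \<Rightarrow> 'a) \<Rightarrow> bool" where
  "is_tower C a b \<longleftrightarrow> (\<forall>n. a n \<in> Obj (tower_cat C a b n) \<and> b n \<in> Obj (tower_cat C a b n))"

definition noetherian :: "'a icat \<Rightarrow> bool" where
  "noetherian C \<longleftrightarrow> (\<forall>a b. is_tower C a b \<longrightarrow>
      (\<exists>N. Contr (Hom (tower_cat C a b N) (a N) (b N))))"

definition locally_noetherian :: "'a icat \<Rightarrow> bool" where
  "locally_noetherian C \<longleftrightarrow> (\<forall>x\<in>Obj C. \<forall>y\<in>Obj C. noetherian (Hom C x y))"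

text \<open>Rank, by transfinite recursion on the ordinal \<theta> (elements of a well-ordered type 'o):
  rank C < \<theta> for \<theta> = 0 iff C is equivalent to *;
  for \<theta> = \<eta>+1 iff all homs have rank < \<eta>;
  for \<theta> a limit iff rank C < \<eta> for some \<eta> < \<theta>.\<close>

definition rank_lt_step ::
  "('o::wellorder \<Rightarrow> 'a icat \<Rightarrow> bool) \<Rightarrow> 'o \<Rightarrow> 'a icat \<Rightarrow> bool" where
  "rank_lt_step R \<theta> C =
    (if (\<forall>\<eta>. \<not> \<eta> < \<theta>) then Contr C
     else if (\<exists>\<eta><\<theta>. \<forall>\<xi>. \<not> (\<eta> < \<xi> \<and> \<xi> < \<theta>))
       then (\<forall>x\<in>Obj C. \<forall>y\<in>Obj C.
               R (THE \<eta>. \<eta> < \<theta> \<and> (\<forall>\<xi>. \<not> (\<eta> < \<xi> \<and> \<xi> < \<theta>))) (Hom C x y))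
     else (\<exists>\<eta><\<theta>. R \<eta> C))"

definition rank_lt :: "'a icat \<Rightarrow> 'o::wellorder \<Rightarrow> bool" where
  "rank_lt C \<theta> = wfrec {(x, y). x < y} rank_lt_step \<theta> C"

end

theory Submission
  imports Defs
begin

lemma wf_lt: "wf {(x, y::'o::wellorder). x < y}"
  by (rule wellorder_class.wf)

lemma rank_unfold:
  "rank_lt C (\<theta>::'o::wellorder) =
     rank_lt_step (\<lambda>\<eta>. if \<eta> < \<theta> then (\<lambda>D. rank_lt D \<eta>) else undefined) \<theta> C"
proof -
  have "wfrec {(x, y). x < y} rank_lt_step \<theta> C =
        rank_lt_step (cut (wfrec {(x, y::'o). x < y} rank_lt_step) {(x, y). x < y} \<theta>) \<theta> C"
    by (subst wfrec[OF wf_lt]) (rule refl)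
  moreover have "cut (wfrec {(x, y::'o). x < y} rank_lt_step) {(x, y). x < y} \<theta>
      = (\<lambda>\<eta>. if \<eta> < \<theta> then (\<lambda>D::'a icat. rank_lt D \<eta>) else undefined)"
    by (auto simp: cut_def rank_lt_def fun_eq_iff)
  ultimately show ?thesis unfolding rank_lt_def by simp
qed

lemma rank_zero:
  assumes "\<forall>\<eta>. \<not> \<eta> < (\<theta>::'o::wellorder)"
  shows "rank_lt C \<theta> = Contr C"
  using assms by (subst rank_unfold) (simp add: rank_lt_step_def)

lemma the_pred:
  assumes "\<eta> < (\<theta>::'o::wellorder)" "\<forall>\<xi>. \<not> (\<eta> < \<xi> \<and> \<xi> < \<theta>)"
  shows "(THE \<eta>. \<eta> < \<theta> \<and> (\<forall>\<xi>. \<not> (\<eta> < \<xi> \<and> \<xi> < \<theta>))) = \<eta>"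
  using assms by (intro the_equality) (auto, meson linorder_neqE)

lemma rank_succ:
  assumes "\<eta> < (\<theta>::'o::wellorder)" "\<forall>\<xi>. \<not> (\<eta> < \<xi> \<and> \<xi> < \<theta>)"
  shows "rank_lt C \<theta> = (\<forall>x\<in>Obj C. \<forall>y\<in>Obj C. rank_lt (Hom C x y) \<eta>)"
proof -
  have n: "\<not> (\<forall>\<eta>. \<not> \<eta> < \<theta>)" using assms by blast
  have e: "\<exists>\<eta><\<theta>. \<forall>\<xi>. \<not> (\<eta> < \<xi> \<and> \<xi> < \<theta>)" using assms by blast
  show ?thesis
    apply (subst rank_unfold)
    unfolding rank_lt_step_def if_not_P[OF n] if_P[OF e] the_pred[OF assms] using assms(1) by simp
qed

lemma rank_lim:
  assumes "\<not> (\<forall>\<eta>. \<not> \<eta> < (\<theta>::'o::wellorder))" "\<not> (\<exists>\<eta><\<theta>. \<forall>\<xi>. \<not> (\<eta> < \<xi> \<and> \<xi> < \<theta>))"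
  shows "rank_lt C \<theta> = (\<exists>\<eta><\<theta>. rank_lt C \<eta>)"
  apply (subst rank_unfold)
  unfolding rank_lt_step_def using assms by auto

lemma valid_hom: "valid_cat C \<Longrightarrow> x \<in> Obj C \<Longrightarrow> y \<in> Obj C \<Longrightarrow> valid_cat (Hom C x y)"
  by (erule valid_cat.cases) auto

lemma valid_contr: "valid_cat C \<Longrightarrow> Contr C \<Longrightarrow> x \<in> Obj C \<Longrightarrow> y \<in> Obj C \<Longrightarrow> Contr (Hom C x y)"
  by (erule valid_cat.cases) auto

lemma ord_cases:
  fixes \<theta> :: "'o::wellorder"
  obtains (zero) "\<forall>\<eta>. \<not> \<eta> < \<theta>"
  | (succ) \<eta> where "\<eta> < \<theta>" "\<forall>\<xi>. \<not> (\<eta> < \<xi> \<and> \<xi> < \<theta>)"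
  | (lim) "\<not> (\<forall>\<eta>. \<not> \<eta> < \<theta>)" "\<not> (\<exists>\<eta><\<theta>. \<forall>\<xi>. \<not> (\<eta> < \<xi> \<and> \<xi> < \<theta>))"
  by blast

lemma rankA:
  fixes \<theta> :: "'o::wellorder"
  shows "valid_cat C \<Longrightarrow> rank_lt C \<theta> \<Longrightarrow>
     Contr C \<or> (\<forall>x\<in>Obj C. \<forall>y\<in>Obj C. \<exists>\<zeta><\<theta>. rank_lt (Hom C x y) \<zeta>)"
proof (induction \<theta> arbitrary: C rule: less_induct)
  case (less \<theta>)
  show ?case
  proof (cases \<theta> rule: ord_cases)
    case zero then show ?thesis using rank_zero[OF zero, of C] less.prems(2) by simp
  next
    case (succ \<eta>)
    have "\<forall>x\<in>Obj C. \<forall>y\<in>Obj C. rank_lt (Hom C x y) \<eta>"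
      using rank_succ[OF succ, of C] less.prems(2) by simp
    then show ?thesis using succ(1) by blast
  next
    case lim
    then obtain \<eta> where e: "\<eta> < \<theta>" "rank_lt C \<eta>" using rank_lim[OF lim, of C] less.prems(2) by blast
    have "Contr C \<or> (\<forall>x\<in>Obj C. \<forall>y\<in>Obj C. \<exists>\<zeta><\<eta>. rank_lt (Hom C x y) \<zeta>)"
      by (rule less.IH[OF e(1) less.prems(1) e(2)])
    then show ?thesis using e(1) by (meson order.strict_trans)
  qed
qed

definition omin :: "'o::wellorder" where "omin = (LEAST x. True)"

lemma omin_min: "\<not> \<eta> < (omin::'o::wellorder)"
  unfolding omin_def using Least_le[of "\<lambda>x. True" \<eta>] by simp

lemma rank_contr: "Contr C \<Longrightarrow> rank_lt C (omin::'o::wellorder)"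
  using rank_zero omin_min by blast

lemma rank_mono:
  fixes \<theta>' :: "'o::wellorder"
  shows "valid_cat C \<Longrightarrow> \<theta> \<le> \<theta>' \<Longrightarrow> rank_lt C \<theta> \<Longrightarrow> rank_lt C \<theta>'"
proof (induction \<theta>' arbitrary: C \<theta> rule: less_induct)
  case (less \<theta>')
  show ?case
  proof (cases "\<theta> = \<theta>'")
    case True then show ?thesis using less.prems(3) by simp
  next
    case False
    then have lt: "\<theta> < \<theta>'" using less.prems(2) by simp
    show ?thesis
    proof (cases \<theta>' rule: ord_cases)
      case zero then show ?thesis using lt by blast
    next
      case lim
      have "\<exists>\<eta><\<theta>'. rank_lt C \<eta>" using lt less.prems(3) by blast
      then show ?thesis using rank_lim[OF lim, of C] by simp
    next
      case (succ \<eta>')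
      have le: "\<theta> \<le> \<eta>'" using succ lt by (metis not_less)
      have "\<forall>x\<in>Obj C. \<forall>y\<in>Obj C. rank_lt (Hom C x y) \<eta>'"
      proof (intro ballI)
        fix x y assume xy: "x \<in> Obj C" "y \<in> Obj C"
        have v: "valid_cat (Hom C x y)" using valid_hom[OF less.prems(1) xy] .
        from rankA[OF less.prems(1) less.prems(3)]
        show "rank_lt (Hom C x y) \<eta>'"
        proof
          assume "Contr C"
          then have "rank_lt (Hom C x y) (omin::'o)"
            using valid_contr[OF less.prems(1) _ xy] rank_contr by blast
          moreover have "omin \<le> \<eta>'" using omin_min[of \<eta>'] by simp
          ultimately show ?thesis using less.IH[OF succ(1) v] by blast
        next
          assume "\<forall>x\<in>Obj C. \<forall>y\<in>Obj C. \<exists>\<zeta><\<theta>. rank_lt (Hom C x y) \<zeta>"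
          then obtain \<zeta> where z: "\<zeta> < \<theta>" "rank_lt (Hom C x y) \<zeta>" using xy by blast
          have "\<zeta> \<le> \<eta>'" using z(1) le by simp
          then show ?thesis using less.IH[OF succ(1) v _ z(2)] by blast
        qed
      qed
      then show ?thesis using rank_succ[OF succ, of C] by simp
    qed
  qed
qed

lemma is_tower_0: "is_tower C a b \<Longrightarrow> a 0 \<in> Obj C \<and> b 0 \<in> Obj C"
  unfolding is_tower_def by (drule spec[of _ 0]) simp

lemma tower_shift:
  "tower_cat C (case_nat x a) (case_nat y b) (Suc n) = tower_cat (Hom C x y) a b n"
  by (induction n) auto

lemma noeth_hom:
  assumes v: "valid_cat C" and nC: "noetherian C" and xy: "x \<in> Obj C" "y \<in> Obj C"
  shows "noetherian (Hom C x y)"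
  unfolding noetherian_def
proof (intro allI impI)
  fix a b assume t: "is_tower (Hom C x y) a b"
  have t': "is_tower C (case_nat x a) (case_nat y b)"
    unfolding is_tower_def
  proof
    fix n show "case_nat x a n \<in> Obj (tower_cat C (case_nat x a) (case_nat y b) n) \<and>
                case_nat y b n \<in> Obj (tower_cat C (case_nat x a) (case_nat y b) n)"
    proof (cases n)
      case 0 then show ?thesis using xy by simp
    next
      case (Suc m)
      have "a m \<in> Obj (tower_cat (Hom C x y) a b m) \<and> b m \<in> Obj (tower_cat (Hom C x y) a b m)"
        using t unfolding is_tower_def by blast
      then show ?thesis unfolding Suc tower_shift by simp
    qed
  qed
  then obtain N where N: "Contr (Hom (tower_cat C (case_nat x a) (case_nat y b) N)
                              (case_nat x a N) (case_nat y b N))"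
    using nC unfolding noetherian_def by blast
  show "\<exists>N. Contr (Hom (tower_cat (Hom C x y) a b N) (a N) (b N))"
  proof (cases N)
    case 0
    then have c: "Contr (Hom C x y)" using N by simp
    have ab: "a 0 \<in> Obj (Hom C x y)" "b 0 \<in> Obj (Hom C x y)"
      using is_tower_0[OF t] by simp_all
    have "Contr (Hom (Hom C x y) (a 0) (b 0))"
      by (rule valid_contr[OF valid_hom[OF v xy] c ab])
    then show ?thesis by (intro exI[of _ 0]) simp
  next
    case (Suc M)
    then show ?thesis using N tower_shift[of C x a y b M]
      by (intro exI[of _ M]) simp
  qed
qed

lemma tower_shift2:
  "tower_cat (Hom C (a 0) (b 0)) (a \<circ> Suc) (b \<circ> Suc) n = tower_cat C a b (Suc n)"
  by (induction n) auto

lemma loc_noeth: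
  assumes "locally_noetherian C" shows "noetherian C"
  unfolding noetherian_def
proof (intro allI impI)
  fix a b assume t: "is_tower C a b"
  have ab: "a 0 \<in> Obj C" "b 0 \<in> Obj C" using is_tower_0[OF t] by simp_all
  have n: "noetherian (Hom C (a 0) (b 0))" using assms ab unfolding locally_noetherian_def by blast
  have "is_tower (Hom C (a 0) (b 0)) (a \<circ> Suc) (b \<circ> Suc)"
    unfolding is_tower_def tower_shift2 unfolding o_def
  proof (intro allI)
    fix n show "a (Suc n) \<in> Obj (tower_cat C a b (Suc n)) \<and> b (Suc n) \<in> Obj (tower_cat C a b (Suc n))"
      using t unfolding is_tower_def by blast
  qed
  then obtain N where "Contr (Hom (tower_cat (Hom C (a 0) (b 0)) (a \<circ> Suc) (b \<circ> Suc) N)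
                          ((a \<circ> Suc) N) ((b \<circ> Suc) N))"
    using n unfolding noetherian_def by blast
  then show "\<exists>N. Contr (Hom (tower_cat C a b N) (a N) (b N))"
    unfolding tower_shift2 by (intro exI[of _ "Suc N"]) simp
qed

lemma rank_noeth:
  fixes \<theta> :: "'o::wellorder"
  shows "valid_cat C \<Longrightarrow> rank_lt C \<theta> \<Longrightarrow> noetherian C"
proof (induction \<theta> arbitrary: C rule: less_induct)
  case (less \<theta>)
  from rankA[OF less.prems] show ?case
  proof
    assume c: "Contr C"
    show ?thesis unfolding noetherian_def
    proof (intro allI impI)
      fix a b assume t: "is_tower C a b"
      have ab: "a 0 \<in> Obj C" "b 0 \<in> Obj C" using is_tower_0[OF t] by simp_all
      then show "\<exists>N. Contr (Hom (tower_cat C a b N) (a N) (b N))"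
        using valid_contr[OF less.prems(1) c ab] by (intro exI[of _ 0]) simp
    qed
  next
    assume h: "\<forall>x\<in>Obj C. \<forall>y\<in>Obj C. \<exists>\<zeta><\<theta>. rank_lt (Hom C x y) \<zeta>"
    have "locally_noetherian C"
      unfolding locally_noetherian_def
    proof (intro ballI)
      fix x y assume xy: "x \<in> Obj C" "y \<in> Obj C"
      then obtain \<zeta> where z: "\<zeta> < \<theta>" "rank_lt (Hom C x y) \<zeta>" using h by blast
      show "noetherian (Hom C x y)"
        by (rule less.IH[OF z(1) valid_hom[OF less.prems(1) xy] z(2)])
    qed
    then show ?thesis by (rule loc_noeth)
  qed
qed

lemma norank_step:
  fixes D :: "'a icat"
  assumes v: "valid_cat D" and nr: "\<not> (\<exists>\<theta>::'o::wellorder. rank_lt D \<theta>)"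
    and small_ordinals: "\<forall>f :: 'a \<Rightarrow> 'a \<Rightarrow> 'o::wellorder. \<exists>\<theta>. \<forall>x y. f x y < \<theta>"
  shows "\<exists>x\<in>Obj D. \<exists>y\<in>Obj D. \<not> (\<exists>\<theta>::'o. rank_lt (Hom D x y) \<theta>)"
proof (rule ccontr)
  assume "\<not> ?thesis"
  then have all: "\<forall>x\<in>Obj D. \<forall>y\<in>Obj D. \<exists>\<theta>::'o. rank_lt (Hom D x y) \<theta>" by blast
  define f where "f = (\<lambda>x y. SOME \<theta>::'o. rank_lt (Hom D x y) \<theta>)"
  obtain \<theta>0 where b: "\<forall>x y. f x y < \<theta>0" using spec[OF small_ordinals, of f] by blast
  obtain \<theta>1 where "\<theta>0 < \<theta>1" using spec[OF small_ordinals, of "\<lambda>x y. \<theta>0"] by blast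
  define s where "s = (LEAST \<theta>. \<theta>0 < \<theta>)"
  have s1: "\<theta>0 < s" unfolding s_def using \<open>\<theta>0 < \<theta>1\<close> by (rule LeastI)
  have s2: "\<forall>\<xi>. \<not> (\<theta>0 < \<xi> \<and> \<xi> < s)"
  proof (intro allI notI)
    fix \<xi> assume "\<theta>0 < \<xi> \<and> \<xi> < s"
    then show False using not_less_Least[of \<xi> "\<lambda>\<theta>. \<theta>0 < \<theta>"] unfolding s_def by blast
  qed
  have "\<forall>x\<in>Obj D. \<forall>y\<in>Obj D. rank_lt (Hom D x y) \<theta>0"
  proof (intro ballI)
    fix x y assume xy: "x \<in> Obj D" "y \<in> Obj D"
    have "\<exists>\<theta>::'o. rank_lt (Hom D x y) \<theta>" using all xy by blast
    then have "rank_lt (Hom D x y) (f x y)" unfolding f_def by (rule someI_ex)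
    then show "rank_lt (Hom D x y) \<theta>0"
      by (rule rank_mono[OF valid_hom[OF v xy] less_imp_le[OF spec[OF spec[OF b]]]])
  qed
  then have "rank_lt D s" using rank_succ[OF s1 s2] by blast
  then show False using nr by blast
qed

lemma noeth_rank:
  fixes C :: "'a icat"
  assumes v: "valid_cat C" and n: "noetherian C"
    and small_ordinals: "\<forall>f :: 'a \<Rightarrow> 'a \<Rightarrow> 'o::wellorder. \<exists>\<theta>. \<forall>x y. f x y < \<theta>"
  shows "\<exists>\<theta>::'o. rank_lt C \<theta>"
proof (rule ccontr)
  assume nr0: "\<not> ?thesis"
  define P where "P = (\<lambda>D::'a icat. valid_cat D \<and> \<not> (\<exists>\<theta>::'o. rank_lt D \<theta>))"
  define step where "step = (\<lambda>D. SOME p. fst p \<in> Obj D \<and> snd p \<in> Obj D \<and> P (Hom D (fst p) (snd p)))"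
  have st: "fst (step D) \<in> Obj D \<and> snd (step D) \<in> Obj D \<and> P (Hom D (fst (step D)) (snd (step D)))"
    if PD: "P D" for D
  proof -
    obtain x y where "x \<in> Obj D" "y \<in> Obj D" "\<not> (\<exists>\<theta>::'o. rank_lt (Hom D x y) \<theta>)"
      using norank_step[of D, OF _ _ small_ordinals] PD unfolding P_def by blast
    then have "\<exists>p. fst p \<in> Obj D \<and> snd p \<in> Obj D \<and> P (Hom D (fst p) (snd p))"
      using PD valid_hom unfolding P_def by (intro exI[of _ "(x,y)"]) auto
    then show ?thesis unfolding step_def by (rule someI_ex)
  qed
  define cats where "cats = rec_nat C (\<lambda>n D. Hom D (fst (step D)) (snd (step D)))"
  define a where "a = (\<lambda>n. fst (step (cats n)))"
  define b where "b = (\<lambda>n. snd (step (cats n)))"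
  have cS: "cats (Suc n) = Hom (cats n) (fst (step (cats n))) (snd (step (cats n)))" for n
    unfolding cats_def by simp
  have c0: "cats 0 = C" unfolding cats_def by simp
  have Pc: "P (cats n)" for n
  proof (induction n)
    case 0 show ?case unfolding c0 P_def using v nr0 by blast
  next
    case (Suc n) show ?case unfolding cS using st[OF Suc.IH] by blast
  qed
  have tc: "tower_cat C a b n = cats n" for n
    by (induction n) (simp_all add: c0 cS a_def b_def)
  have "is_tower C a b" unfolding is_tower_def tc
  proof
    fix n show "a n \<in> Obj (cats n) \<and> b n \<in> Obj (cats n)" unfolding a_def b_def using st[OF Pc[of n]] by blast
  qed
  then obtain N where "Contr (Hom (tower_cat C a b N) (a N) (b N))" using n unfolding noetherian_def by blast
  then have "Contr (cats (Suc N))" using tc[of "Suc N"] by simp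
  then have "rank_lt (cats (Suc N)) (omin::'o)" by (rule rank_contr)
  then show False using Pc[of "Suc N"] unfolding P_def by blast
qed

theorem lemma3p5:
  fixes C :: "'a icat"
  assumes "valid_cat C"
    and small_ordinals: "\<forall>f :: 'a \<Rightarrow> 'a \<Rightarrow> 'o::wellorder. \<exists>\<theta>. \<forall>x y. f x y < \<theta>"
  shows "(noetherian C \<longleftrightarrow> locally_noetherian C)
       \<and> (noetherian C \<longleftrightarrow> (\<exists>\<theta>::'o. rank_lt C \<theta>))
       \<and> (noetherian C \<longleftrightarrow> (\<forall>x\<in>Obj C. \<forall>y\<in>Obj C. \<exists>\<theta>::'o. rank_lt (Hom C x y) \<theta>))"
proof -
  have e1: "noetherian C \<longleftrightarrow> locally_noetherian C"
  proof
    assume "noetherian C"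
    then show "locally_noetherian C"
      unfolding locally_noetherian_def using noeth_hom[OF assms(1)] by blast
  next
    assume "locally_noetherian C" then show "noetherian C" by (rule loc_noeth)
  qed
  have e2: "noetherian D \<longleftrightarrow> (\<exists>\<theta>::'o. rank_lt D \<theta>)" if vD: "valid_cat D" for D :: "'a icat"
  proof
    assume "noetherian D" then show "\<exists>\<theta>::'o. rank_lt D \<theta>" by (rule noeth_rank[OF vD _ small_ordinals])
  next
    assume "\<exists>\<theta>::'o. rank_lt D \<theta>"
    then obtain \<theta> :: 'o where "rank_lt D \<theta>" by blast
    then show "noetherian D" by (rule rank_noeth[OF vD])
  qed
  have e3: "locally_noetherian C \<longleftrightarrow> (\<forall>x\<in>Obj C. \<forall>y\<in>Obj C. \<exists>\<theta>::'o. rank_lt (Hom C x y) \<theta>)"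
  proof -
    have "\<forall>x\<in>Obj C. \<forall>y\<in>Obj C. (noetherian (Hom C x y) \<longleftrightarrow> (\<exists>\<theta>::'o. rank_lt (Hom C x y) \<theta>))"
      using e2 valid_hom[OF assms(1)] by simp
    then show ?thesis unfolding locally_noetherian_def by simp
  qed
  show ?thesis using e1 e2[OF assms(1)] e3 by simp
qed

end
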